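(* For every $w\in W$, the Chari operator $T_w$ maps the subring $\mathbb{Z}[W_{i,a}^{\pm1}]_{i\in I,a\in\mathbb{C}^\times}\subset\mathcal{Y}$ into itself.
   Context: Let $\mathfrak{g}$ be a finite-dimensional simple complex Lie algebra with Dynkin index set $I=\{1,\dots,n\}$ and Cartan matrix $C=(C_{i,j})_{i,j\in I}$. Let $d_i$ ($i\in I$) be the relatively prime positive integers such that $(d_iC_{i,j})$ is symmetric, and let $d=\max_i d_i$ be the lacing number. Let $W$ be the Weyl group, generated by simple reflections $s_i$. Fix $q\in\mathbb{C}^\times$ not a root of unity and set $q_i=q^{d_i}$. Let $\mathcal{Y}=\mathbb{Z}[Y_{i,a}^{\pm1}]_{i\in I,a\in\mathbb{C}^\times}$ and $$A_{i,a}=Y_{i,aq_i^{-1}}Y_{i,aq_i}\Big(\prod_{j:C_{j,i}=-1}Y_{j,a}\prod_{j:C_{j,i}=-2}Y_{j,aq^{-1}}Y_{j,aq}\prod_{j:C_{j,i}=-3}Y_{j,aq^{-2}}Y_{j,a}Y_{j,aq^2}\Big)^{-1}.$$ The Chari operators are the ring automorphisms $T_i$ ($i\in I$) of $\mathcal{Y}$ with $T_i(Y_{i,a})=Y_{i,a}A_{i,aq_i}^{-1}$ and $T_i(Y_{j,a})=Y_{j,a}$ for $j\neq i$; they satisfy the braid relations of $\mathfrak{g}$, and for $w\in W$ with reduced decomposition $w=s_{i_1}\cdots s_{i_k}$ one sets $T_w=T_{i_1}\cdots T_{i_k}$ (independent of the reduced decomposition). For $i\in I$, $a\in\mathbb{C}^\times$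 set $W_{i,a}=Y_{i,a}$ if $d_i=d$, $W_{i,a}=Y_{i,aq^{-1}}Y_{i,aq}$ if $d_i=d-1$, and $W_{i,a}=Y_{i,aq^{-2}}Y_{i,a}Y_{i,aq^2}$ if $d_i=d-2$. *)

theory Defs
  imports "HOL-Analysis.Analysis" "HOL-Library.Poly_Mapping"
begin

text \<open>C :: nat => nat => int is the Cartan matrix, dd i are the
 symmetrizing integers d_i. The hypothesis below is the standard intrinsic characterization
 of the Cartan matrix of a finite-dimensional simple complex Lie algebra: an indecomposable
 symmetrizable generalized Cartan matrix of finite (positive definite) type, together with the
 relatively prime positive symmetrizers d_i.\<close>

definition cartan_simple :: "nat \<Rightarrow> (nat \<Rightarrow> nat \<Rightarrow> int) \<Rightarrow> (nat \<Rightarrow> nat) \<Rightarrow> bool" where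
  "cartan_simple n C dd \<longleftrightarrow>
     n \<ge> 1
   \<and> (\<forall>i\<in>{1..n}. C i i = 2)
   \<and> (\<forall>i\<in>{1..n}. \<forall>j\<in>{1..n}. i \<noteq> j \<longrightarrow> C i j \<le> 0)
   \<and> (\<forall>i\<in>{1..n}. \<forall>j\<in>{1..n}. C i j = 0 \<longleftrightarrow> C j i = 0)
   \<and> (\<forall>i\<in>{1..n}. dd i > 0)
   \<and> (\<forall>i\<in>{1..n}. \<forall>j\<in>{1..n}. int (dd i) * C i j = int (dd j) * C j i)
   \<and> Gcd (dd ` {1..n}) = 1
   \<and> (\<forall>x :: nat \<Rightarrow> real. (\<exists>i\<in>{1..n}. x i \<noteq> 0) \<longrightarrow>
        (\<Sum>i\<in>{1..n}. \<Sum>j\<in>{1..n}. x i * real (dd i) * real_of_int (C i j) * x j) > 0)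
   \<and> (\<forall>J. J \<subseteq> {1..n} \<and> J \<noteq> {} \<and> J \<noteq> {1..n} \<longrightarrow>
        (\<exists>j\<in>J. \<exists>k\<in>{1..n} - J. C j k \<noteq> 0))"

definition lacing :: "nat \<Rightarrow> (nat \<Rightarrow> nat) \<Rightarrow> nat" where
  "lacing n dd = Max (dd ` {1..n})"

definition not_root_of_unity :: "complex \<Rightarrow> bool" where
  "not_root_of_unity q \<longleftrightarrow> q \<noteq> 0 \<and> (\<forall>k::nat. k > 0 \<longrightarrow> q ^ k \<noteq> 1)"

text \<open>Monomials are finitely supported exponent vectors (nat \<times> complex) =>0 int, and
 the Laurent polynomial ring is the group ring of this free abelian group, i.e. finitely
 supported functions from monomials to int with convolution product (Poly_Mapping).
 Only variables with i in I and a nonzero are relevant.\<close>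

type_synonym mon = "(nat \<times> complex) \<Rightarrow>\<^sub>0 int"
type_synonym Yring = "mon \<Rightarrow>\<^sub>0 int"

definition ev :: "nat \<Rightarrow> complex \<Rightarrow> mon" where
  "ev i a = Poly_Mapping.single (i, a) 1"

definition Ymon :: "mon \<Rightarrow> Yring" where
  "Ymon m = Poly_Mapping.single m 1"

definition Aexp :: "nat \<Rightarrow> (nat \<Rightarrow> nat \<Rightarrow> int) \<Rightarrow> (nat \<Rightarrow> nat) \<Rightarrow> complex \<Rightarrow> nat \<Rightarrow> complex \<Rightarrow> mon" where
  "Aexp n C dd q i b =
     ev i (b / q ^ dd i) + ev i (b * q ^ dd i)
     - ((\<Sum>j\<in>{j\<in>{1..n}. C j i = -1}. ev j b)
      + (\<Sum>j\<in>{j\<in>{1..n}. C j i = -2}. ev j (b / q) + ev j (b * q))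
      + (\<Sum>j\<in>{j\<in>{1..n}. C j i = -3}. ev j (b / q^2) + ev j b + ev j (b * q^2)))"

definition Aelt :: "nat \<Rightarrow> (nat \<Rightarrow> nat \<Rightarrow> int) \<Rightarrow> (nat \<Rightarrow> nat) \<Rightarrow> complex \<Rightarrow> nat \<Rightarrow> complex \<Rightarrow> Yring" where
  "Aelt n C dd q i b = Ymon (Aexp n C dd q i b)"

text \<open>Action of the Chari operator T_i on monomials: Y_{i,a} maps to Y_{i,a} A_{i,a q_i}^{-1},
 Y_{j,a} (j distinct from i) is fixed, extended multiplicatively.\<close>
definition Tmon :: "nat \<Rightarrow> (nat \<Rightarrow> nat \<Rightarrow> int) \<Rightarrow> (nat \<Rightarrow> nat) \<Rightarrow> complex \<Rightarrow> nat \<Rightarrow> mon \<Rightarrow> mon" where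
  "Tmon n C dd q i m =
     m - (\<Sum>a\<in>{a. Poly_Mapping.lookup m (i, a) \<noteq> 0}.
            Poly_Mapping.map (\<lambda>x. Poly_Mapping.lookup m (i, a) * x) (Aexp n C dd q i (a * q ^ dd i)))"

definition Tchari :: "nat \<Rightarrow> (nat \<Rightarrow> nat \<Rightarrow> int) \<Rightarrow> (nat \<Rightarrow> nat) \<Rightarrow> complex \<Rightarrow> nat \<Rightarrow> Yring \<Rightarrow> Yring" where
  "Tchari n C dd q i f = (\<Sum>m\<in>Poly_Mapping.keys f. Poly_Mapping.single (Tmon n C dd q i m) (Poly_Mapping.lookup f m))"

text \<open>Simple reflection s_i acting on the root lattice (coordinates w.r.t. simple roots):
 s_i(v) = v - (sum_j C_{i,j} v_j) alpha_i.\<close>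
definition sref :: "nat \<Rightarrow> (nat \<Rightarrow> nat \<Rightarrow> int) \<Rightarrow> nat \<Rightarrow> (nat \<Rightarrow> int) \<Rightarrow> (nat \<Rightarrow> int)" where
  "sref n C i v = v(i := v i - (\<Sum>j\<in>{1..n}. C i j * v j))"

definition word_elt :: "nat \<Rightarrow> (nat \<Rightarrow> nat \<Rightarrow> int) \<Rightarrow> nat list \<Rightarrow> ((nat \<Rightarrow> int) \<Rightarrow> (nat \<Rightarrow> int))" where
  "word_elt n C ws = foldr (\<lambda>i f. sref n C i \<circ> f) ws id"

definition weyl_group :: "nat \<Rightarrow> (nat \<Rightarrow> nat \<Rightarrow> int) \<Rightarrow> ((nat \<Rightarrow> int) \<Rightarrow> (nat \<Rightarrow> int)) set" where
  "weyl_group n C = {word_elt n C ws | ws. set ws \<subseteq> {1..n}}"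

definition reduced_word :: "nat \<Rightarrow> (nat \<Rightarrow> nat \<Rightarrow> int) \<Rightarrow> ((nat \<Rightarrow> int) \<Rightarrow> (nat \<Rightarrow> int)) \<Rightarrow> nat list \<Rightarrow> bool" where
  "reduced_word n C w ws \<longleftrightarrow> set ws \<subseteq> {1..n} \<and> word_elt n C ws = w \<and>
     (\<forall>vs. set vs \<subseteq> {1..n} \<and> word_elt n C vs = w \<longrightarrow> length ws \<le> length vs)"

definition Tword :: "nat \<Rightarrow> (nat \<Rightarrow> nat \<Rightarrow> int) \<Rightarrow> (nat \<Rightarrow> nat) \<Rightarrow> complex \<Rightarrow> nat list \<Rightarrow> Yring \<Rightarrow> Yring" where
  "Tword n C dd q ws = foldr (\<lambda>i f. Tchari n C dd q i \<circ> f) ws id"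

definition Tw :: "nat \<Rightarrow> (nat \<Rightarrow> nat \<Rightarrow> int) \<Rightarrow> (nat \<Rightarrow> nat) \<Rightarrow> complex \<Rightarrow> ((nat \<Rightarrow> int) \<Rightarrow> (nat \<Rightarrow> int)) \<Rightarrow> Yring \<Rightarrow> Yring" where
  "Tw n C dd q w = Tword n C dd q (SOME ws. reduced_word n C w ws)"

definition Wexp :: "nat \<Rightarrow> (nat \<Rightarrow> nat) \<Rightarrow> complex \<Rightarrow> nat \<Rightarrow> complex \<Rightarrow> mon" where
  "Wexp n dd q i a =
     (if dd i = lacing n dd then ev i a
      else if dd i + 1 = lacing n dd then ev i (a / q) + ev i (a * q)
      else ev i (a / q^2) + ev i a + ev i (a * q^2))"

inductive_set Wsubring :: "nat \<Rightarrow> (nat \<Rightarrow> nat) \<Rightarrow> complex \<Rightarrow> Yring set"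
  for n dd q where
  one: "1 \<in> Wsubring n dd q"
| gen: "i \<in> {1..n} \<Longrightarrow> a \<noteq> 0 \<Longrightarrow> Ymon (Wexp n dd q i a) \<in> Wsubring n dd q"
| geninv: "i \<in> {1..n} \<Longrightarrow> a \<noteq> 0 \<Longrightarrow> Ymon (- Wexp n dd q i a) \<in> Wsubring n dd q"
| neg: "x \<in> Wsubring n dd q \<Longrightarrow> - x \<in> Wsubring n dd q"
| add: "x \<in> Wsubring n dd q \<Longrightarrow> y \<in> Wsubring n dd q \<Longrightarrow> x + y \<in> Wsubring n dd q"
| mult: "x \<in> Wsubring n dd q \<Longrightarrow> y \<in> Wsubring n dd q \<Longrightarrow> x * y \<in> Wsubring n dd q"

end

theory Submission
  imports Defs
begin


inductive_set MW :: "nat \<Rightarrow> (nat \<Rightarrow> nat) \<Rightarrow> complex \<Rightarrow> mon set" for n dd q where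
  zero: "0 \<in> MW n dd q"
| gen: "i \<in> {1..n} \<Longrightarrow> a \<noteq> 0 \<Longrightarrow> m \<in> MW n dd q \<Longrightarrow> Wexp n dd q i a + m \<in> MW n dd q"
| geninv: "i \<in> {1..n} \<Longrightarrow> a \<noteq> 0 \<Longrightarrow> m \<in> MW n dd q \<Longrightarrow> m - Wexp n dd q i a \<in> MW n dd q"

lemma MW_add: "x \<in> MW n dd q \<Longrightarrow> y \<in> MW n dd q \<Longrightarrow> x + y \<in> MW n dd q"
proof (induction x rule: MW.induct)
  case zero then show ?case by simp
next
  case (gen i a m) then show ?case using MW.gen[of i n a "m + y"] by (simp add: add.assoc)
next
  case (geninv i a m) then show ?case using MW.geninv[of i n a "m + y"] by (simp add: algebra_simps)
qed

lemma MW_uminus: "x \<in> MW n dd q \<Longrightarrow> - x \<in> MW n dd q"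
proof (induction x rule: MW.induct)
  case zero then show ?case by (simp add: MW.zero)
next
  case (gen i a m) then show ?case using MW.geninv[of i n a "- m"] by (simp add: algebra_simps)
next
  case (geninv i a m) then show ?case using MW.gen[of i n a "- m"] by (simp add: algebra_simps)
qed

lemma MW_diff: "x \<in> MW n dd q \<Longrightarrow> y \<in> MW n dd q \<Longrightarrow> x - y \<in> MW n dd q"
  using MW_add[OF _ MW_uminus, of x n dd q y] by simp

lemma MW_W: "i \<in> {1..n} \<Longrightarrow> a \<noteq> 0 \<Longrightarrow> Wexp n dd q i a \<in> MW n dd q"
  using MW.gen[OF _ _ MW.zero] by simp

lemma MW_sum_list: "(\<And>x. x \<in> set xs \<Longrightarrow> x \<in> MW n dd q) \<Longrightarrow> sum_list xs \<in> MW n dd q"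
  by (induction xs) (auto intro: MW_add MW.zero)

lemma W_zero: "0 \<in> Wsubring n dd q"
  using Wsubring.add[OF Wsubring.one Wsubring.neg[OF Wsubring.one]] by simp

lemma Ymon_MW: "m \<in> MW n dd q \<Longrightarrow> Ymon m \<in> Wsubring n dd q"
proof (induction m rule: MW.induct)
  case zero then show ?case by (simp add: Ymon_def Wsubring.one)
next
  case (gen i a m)
  have "Ymon (Wexp n dd q i a + m) = Ymon (Wexp n dd q i a) * Ymon m"
    by (simp add: Ymon_def mult_single)
  then show ?case using Wsubring.mult[OF Wsubring.gen[OF gen(1,2)] gen(4)] by simp
next
  case (geninv i a m)
  have "Ymon (m - Wexp n dd q i a) = Ymon m * Ymon (- Wexp n dd q i a)"
    by (simp add: Ymon_def mult_single)
  then show ?case using Wsubring.mult[OF geninv(4) Wsubring.geninv[OF geninv(1,2)]] by simp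
qed

lemma single_nat_MW: "m \<in> MW n dd q \<Longrightarrow> Poly_Mapping.single m (int k) \<in> Wsubring n dd q"
proof (induction k)
  case 0 then show ?case by (simp add: W_zero)
next
  case (Suc k)
  have "Poly_Mapping.single m (int (Suc k)) = Poly_Mapping.single m (int k) + Ymon m"
    by (simp add: Ymon_def add.commute flip: single_add)
  then show ?case using Wsubring.add[OF Suc.IH[OF Suc.prems] Ymon_MW[OF Suc.prems]] by simp
qed

lemma single_MW: assumes "m \<in> MW n dd q" shows "Poly_Mapping.single m c \<in> Wsubring n dd q"
proof (cases "c \<ge> 0")
  case True
  then have "c = int (nat c)" by simp
  then show ?thesis using single_nat_MW[OF assms, of "nat c"] by simp
next
  case False
  then have "c = - int (nat (-c))" by simp
  then have "Poly_Mapping.single m c = - Poly_Mapping.single m (int (nat (-c)))"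
    by (metis single_uminus)
  then show ?thesis using single_nat_MW[OF assms, of "nat (-c)"] Wsubring.neg by simp
qed

lemma Wsub_sum: "finite S \<Longrightarrow> (\<And>x. x \<in> S \<Longrightarrow> g x \<in> Wsubring n dd q) \<Longrightarrow> sum g S \<in> Wsubring n dd q"
  by (induction S rule: finite_induct) (auto intro: W_zero Wsubring.add)

lemma Wsub_keys: "f \<in> Wsubring n dd q \<Longrightarrow> Poly_Mapping.keys f \<subseteq> MW n dd q"
proof (induction f rule: Wsubring.induct)
  case one
  have "(1::Yring) = Poly_Mapping.single 0 1" by simp
  then show ?case by (simp add: MW.zero)
next
  case (gen i a) then show ?case by (simp add: Ymon_def MW_W)
next
  case (geninv i a) then show ?case by (simp add: Ymon_def MW_W MW_uminus)
next
  case (neg x) then show ?case by simp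
next
  case (add x y) then show ?case using keys_add[of x y] by (meson Un_subset_iff subset_trans)
next
  case (mult x y)
  show ?case
  proof
    fix k assume "k \<in> Poly_Mapping.keys (x * y)"
    then obtain a b where "k = a + b" "a \<in> Poly_Mapping.keys x" "b \<in> Poly_Mapping.keys y"
      using keys_mult[of x y] by blast
    then show "k \<in> MW n dd q" using mult.IH MW_add by blast
  qed
qed

lemma Tchari_W:
  assumes "\<And>m. m \<in> MW n dd q \<Longrightarrow> Tmon n C dd q i m \<in> MW n dd q"
    and "f \<in> Wsubring n dd q"
  shows "Tchari n C dd q i f \<in> Wsubring n dd q"
  unfolding Tchari_def
  by (rule Wsub_sum) (use Wsub_keys[OF assms(2)] assms(1) single_MW in auto)




lemma lookup_map_mult: "Poly_Mapping.lookup (Poly_Mapping.map (\<lambda>x. c * x) (p::mon)) k = (c::int) * Poly_Mapping.lookup p k"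
  by (auto simp add: map.rep_eq when_def)

lemma supp_fin: "finite {a. Poly_Mapping.lookup (m::mon) (i,a) \<noteq> 0}"
proof -
  have "{a. Poly_Mapping.lookup m (i,a) \<noteq> 0} = Pair i -` Poly_Mapping.keys m" by (auto simp: in_keys_iff)
  then show ?thesis using finite_vimageI[OF finite_keys, of "Pair i" m] by (simp add: inj_on_def)
qed

lemma Tmon_lookup:
  assumes "finite S" "{a. Poly_Mapping.lookup m (i,a) \<noteq> 0} \<subseteq> S"
  shows "Poly_Mapping.lookup (Tmon n C dd q i m) k = Poly_Mapping.lookup m k
     - (\<Sum>a\<in>S. Poly_Mapping.lookup m (i,a) * Poly_Mapping.lookup (Aexp n C dd q i (a * q ^ dd i)) k)"
proof -
  have "(\<Sum>a\<in>{a. Poly_Mapping.lookup m (i,a) \<noteq> 0}. Poly_Mapping.lookup m (i,a) * Poly_Mapping.lookup (Aexp n C dd q i (a * q ^ dd i)) k)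
      = (\<Sum>a\<in>S. Poly_Mapping.lookup m (i,a) * Poly_Mapping.lookup (Aexp n C dd q i (a * q ^ dd i)) k)"
    by (rule sum.mono_neutral_left) (use assms in auto)
  then show ?thesis unfolding Tmon_def by (simp add: lookup_minus lookup_sum lookup_map_mult)
qed

lemma Tmon_add: "Tmon n C dd q i (m1 + m2) = Tmon n C dd q i m1 + Tmon n C dd q i m2"
proof (rule poly_mapping_eqI)
  fix k
  define S where "S = {a. Poly_Mapping.lookup m1 (i,a) \<noteq> 0} \<union> {a. Poly_Mapping.lookup m2 (i,a) \<noteq> 0} \<union> {a. Poly_Mapping.lookup (m1+m2) (i,a) \<noteq> 0}"
  have f: "finite S" unfolding S_def using supp_fin by blast
  show "Poly_Mapping.lookup (Tmon n C dd q i (m1 + m2)) k = Poly_Mapping.lookup (Tmon n C dd q i m1 + Tmon n C dd q i m2) k"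
    unfolding lookup_add
    apply (subst (1 2 3) Tmon_lookup[OF f])
    by (auto simp: S_def lookup_add ring_distribs sum.distrib)
qed

lemma Tmon_uminus: "Tmon n C dd q i (- m) = - Tmon n C dd q i m"
proof (rule poly_mapping_eqI)
  fix k
  define S where "S = {a. Poly_Mapping.lookup m (i,a) \<noteq> 0}"
  have f: "finite S" unfolding S_def using supp_fin by blast
  show "Poly_Mapping.lookup (Tmon n C dd q i (- m)) k = Poly_Mapping.lookup (- Tmon n C dd q i m) k"
    unfolding lookup_uminus
    apply (subst (1 2) Tmon_lookup[OF f])
    by (auto simp: S_def sum_negf)
qed

lemma Tmon_zero: "Tmon n C dd q i 0 = 0"
  using Tmon_add[of n C dd q i 0 0] by simp

lemma Tmon_diff: "Tmon n C dd q i (m1 - m2) = Tmon n C dd q i m1 - Tmon n C dd q i m2"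
  using Tmon_add[of n C dd q i m1 "- m2"] Tmon_uminus[of n C dd q i m2] by simp

lemma Tmon_ev: "Tmon n C dd q i (ev j b) = (if j = i then ev i b - Aexp n C dd q i (b * q ^ dd i) else ev j b)"
proof (rule poly_mapping_eqI)
  fix k
  have f: "finite {b}" by simp
  have s: "{a. Poly_Mapping.lookup (ev j b) (i,a) \<noteq> 0} \<subseteq> {b}"
    by (auto simp: ev_def lookup_single when_def)
  show "Poly_Mapping.lookup (Tmon n C dd q i (ev j b)) k = Poly_Mapping.lookup (if j = i then ev i b - Aexp n C dd q i (b * q ^ dd i) else ev j b) k"
    by (subst Tmon_lookup[OF f s]) (auto simp: ev_def lookup_single when_def lookup_minus)
qed

lemma Tmon_sum_list: "Tmon n C dd q i (sum_list xs) = sum_list (map (Tmon n C dd q i) xs)"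
  by (induction xs) (auto simp: Tmon_zero Tmon_add)




definition kind :: "nat \<Rightarrow> (nat \<Rightarrow> nat) \<Rightarrow> nat \<Rightarrow> nat" where
  "kind n dd j = (if dd j = lacing n dd then 0 else if dd j + 1 = lacing n dd then 1 else 2)"

definition Wl :: "complex \<Rightarrow> nat \<Rightarrow> complex \<Rightarrow> complex list" where
  "Wl q k a = (if k = 0 then [a] else if k = 1 then [a/q, a*q] else [a/q^2, a, a*q^2])"

lemma Wexp_Wl: "Wexp n dd q j a = sum_list (map (ev j) (Wl q (kind n dd j) a))"
  by (simp add: Wexp_def kind_def Wl_def)

lemma Wl_scale: "q \<noteq> 0 \<Longrightarrow> map (\<lambda>b. b * t) (Wl q k a) = Wl q k (a * t)"
  by (simp add: Wl_def field_simps)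

lemma Wl_nz: "a \<noteq> 0 \<Longrightarrow> q \<noteq> 0 \<Longrightarrow> b \<in> set (Wl q k a) \<Longrightarrow> b \<noteq> 0"
  by (auto simp: Wl_def split: if_splits)

definition Pj :: "(nat \<Rightarrow> nat \<Rightarrow> int) \<Rightarrow> complex \<Rightarrow> nat \<Rightarrow> nat \<Rightarrow> complex \<Rightarrow> mon" where
  "Pj C q i j c = (if C j i = -1 then ev j c else 0) + (if C j i = -2 then ev j (c/q) + ev j (c*q) else 0)
      + (if C j i = -3 then ev j (c/q^2) + ev j c + ev j (c*q^2) else 0)"

lemma Aexp_alt: "Aexp n C dd q i b = ev i (b / q ^ dd i) + ev i (b * q ^ dd i) - (\<Sum>j\<in>{1..n}. Pj C q i j b)"
proof -
  have h1: "(\<Sum>j\<in>{j\<in>{1..n}. C j i = -1}. ev j b) = (\<Sum>j\<in>{1..n}. if C j i = -1 then ev j b else 0)"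
    by (rule sum.inter_filter) simp
  have h2: "(\<Sum>j\<in>{j\<in>{1..n}. C j i = -2}. ev j (b / q) + ev j (b * q)) = (\<Sum>j\<in>{1..n}. if C j i = -2 then ev j (b / q) + ev j (b * q) else 0)"
    by (rule sum.inter_filter) simp
  have h3: "(\<Sum>j\<in>{j\<in>{1..n}. C j i = -3}. ev j (b / q^2) + ev j b + ev j (b * q^2)) = (\<Sum>j\<in>{1..n}. if C j i = -3 then ev j (b / q^2) + ev j b + ev j (b * q^2) else 0)"
    by (rule sum.inter_filter) simp
  show ?thesis unfolding Aexp_def h1 h2 h3 unfolding Pj_def sum.distrib ..
qed

lemma sum_list_sum_swap: "sum_list (map (\<lambda>b. \<Sum>j\<in>J. g j b) xs) = (\<Sum>j\<in>J. sum_list (map (g j) xs))"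
  by (induction xs) (auto simp: sum.distrib)

lemma MW_sum: "(\<And>j. j \<in> J \<Longrightarrow> g j \<in> MW n dd q) \<Longrightarrow> sum g J \<in> MW n dd q"
proof (induction J rule: infinite_finite_induct)
  case (infinite A) then show ?case by (simp add: MW.zero)
next
  case empty then show ?case by (simp add: MW.zero)
next
  case (insert x F) then show ?case by (simp add: MW_add)
qed

lemma Pj_MW:
  assumes "c \<noteq> 0" "j \<in> {1..n}"
    and "kind n dd j = 0 \<or> (C j i = -2 \<and> kind n dd j = 1) \<or> (C j i = -3 \<and> kind n dd j = 2) \<or> C j i \<notin> {-1,-2,-3}"
    and "q \<noteq> 0"
  shows "Pj C q i j c \<in> MW n dd q"
proof -
  have W: "\<And>x. x \<noteq> 0 \<Longrightarrow> Wexp n dd q j x \<in> MW n dd q" using MW_W assms(2) by blast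
  consider "kind n dd j = 0" | "C j i = -2 \<and> kind n dd j = 1" | "C j i = -3 \<and> kind n dd j = 2" | "C j i \<notin> {-1,-2,-3}"
    using assms(3) by auto
  then show ?thesis
  proof cases
    case 1
    then have e: "\<And>x. ev j x = Wexp n dd q j x" by (simp add: Wexp_Wl Wl_def)
    show ?thesis unfolding Pj_def e using assms
      by (auto intro!: MW_add W MW.zero)
  next
    case 2
    then have "Pj C q i j c = Wexp n dd q j c" by (simp add: Pj_def Wexp_Wl Wl_def)
    then show ?thesis using W assms by simp
  next
    case 3
    then have "Pj C q i j c = Wexp n dd q j c" by (simp add: Pj_def Wexp_Wl Wl_def add.assoc)
    then show ?thesis using W assms by simp
  next
    case 4
    then have "Pj C q i j c = 0" by (simp add: Pj_def)
    then show ?thesis by (simp add: MW.zero)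
  qed
qed

definition good :: "nat \<Rightarrow> (nat \<Rightarrow> nat \<Rightarrow> int) \<Rightarrow> (nat \<Rightarrow> nat) \<Rightarrow> bool" where
  "good n C dd \<longleftrightarrow> (\<forall>i\<in>{1..n}. \<forall>j\<in>{1..n}.
     (C j i = -1 \<longrightarrow> kind n dd j = 0 \<or> kind n dd j = kind n dd i)
   \<and> (C j i = -2 \<longrightarrow> kind n dd j \<le> 1) \<and> (C j i = -3 \<longrightarrow> kind n dd j = 0 \<or> kind n dd j = 2))"

lemma Sj_MW:
  assumes g: "good n C dd" and i: "i \<in> {1..n}" and j: "j \<in> {1..n}" and q: "q \<noteq> 0" and a: "a \<noteq> 0"
  shows "sum_list (map (Pj C q i j) (Wl q (kind n dd i) a)) \<in> MW n dd q"
proof (cases "C j i = -1 \<and> kind n dd j \<noteq> 0")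
  case True
  then have k: "kind n dd j = kind n dd i" using bspec[OF bspec[OF g[unfolded good_def] i] j] True by auto
  have "map (Pj C q i j) (Wl q (kind n dd i) a) = map (ev j) (Wl q (kind n dd j) a)"
    using True k by (simp add: Pj_def)
  then show ?thesis using MW_W[OF j a] by (simp add: Wexp_Wl)
next
  case False
  have "kind n dd j = 0 \<or> (C j i = -2 \<and> kind n dd j = 1) \<or> (C j i = -3 \<and> kind n dd j = 2) \<or> C j i \<notin> {-1,-2,-3}"
  proof -
    have G: "(C j i = -1 \<longrightarrow> kind n dd j = 0 \<or> kind n dd j = kind n dd i)
   \<and> (C j i = -2 \<longrightarrow> kind n dd j \<le> 1) \<and> (C j i = -3 \<longrightarrow> kind n dd j = 0 \<or> kind n dd j = 2)"
      using bspec[OF bspec[OF g[unfolded good_def] i] j] by simp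
    have kk: "kind n dd j \<le> 2" by (simp add: kind_def)
    show ?thesis using False G kk by auto
  qed
  then show ?thesis
    using Pj_MW[OF _ j _ q] Wl_nz[OF a q] by (auto intro!: MW_sum_list)
qed

lemma Tmon_W:
  assumes g: "good n C dd" and i: "i \<in> {1..n}" and j0: "j0 \<in> {1..n}" and q: "q \<noteq> 0" and a: "a \<noteq> 0"
  shows "Tmon n C dd q i (Wexp n dd q j0 a) \<in> MW n dd q"
proof (cases "j0 = i")
  case False
  have "Tmon n C dd q i (Wexp n dd q j0 a) = Wexp n dd q j0 a"
    unfolding Wexp_Wl Tmon_sum_list using False by (simp add: Tmon_ev comp_def)
  then show ?thesis using MW_W[OF j0 a] by simp
next
  case True
  define t where "t = q ^ dd i"
  have t0: "t \<noteq> 0" using q by (simp add: t_def)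
  define bs where "bs = Wl q (kind n dd i) a"
  have "Tmon n C dd q i (Wexp n dd q j0 a) = sum_list (map (\<lambda>b. ev i b - Aexp n C dd q i (b * t)) bs)"
    unfolding Wexp_Wl Tmon_sum_list using True by (simp add: Tmon_ev comp_def t_def bs_def)
  also have "\<dots> = sum_list (map (\<lambda>b. (\<Sum>j\<in>{1..n}. Pj C q i j (b * t)) - ev i (b * (t * t))) bs)"
    unfolding Aexp_alt t_def[symmetric] using t0
    by (intro arg_cong[where f=sum_list] map_cong refl) (simp add: field_simps)
  also have "\<dots> = (\<Sum>j\<in>{1..n}. sum_list (map (Pj C q i j) (Wl q (kind n dd i) (a * t)))) - Wexp n dd q i (a * (t * t))"
    unfolding sum_list_subtractf sum_list_sum_swap Wexp_Wl
    by (simp add: bs_def Wl_scale[OF q, symmetric] comp_def)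
  finally have e: "Tmon n C dd q i (Wexp n dd q j0 a) = \<dots>" .
  have "(\<Sum>j\<in>{1..n}. sum_list (map (Pj C q i j) (Wl q (kind n dd i) (a * t)))) \<in> MW n dd q"
  proof (rule MW_sum)
    fix j assume "j \<in> {1..n}"
    then show "sum_list (map (Pj C q i j) (Wl q (kind n dd i) (a * t))) \<in> MW n dd q"
      using Sj_MW[OF g i _ q] a t0 by simp
  qed
  then show ?thesis unfolding e using MW_diff MW_W[OF i] a t0 by simp
qed




lemma Tmon_MW:
  assumes g: "good n C dd" and i: "i \<in> {1..n}" and q: "q \<noteq> 0"
  shows "m \<in> MW n dd q \<Longrightarrow> Tmon n C dd q i m \<in> MW n dd q"
proof (induction m rule: MW.induct)
  case zero then show ?case by (simp add: Tmon_zero MW.zero)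
next
  case (gen j a m) then show ?case using Tmon_W[OF g i gen(1) q gen(2)] by (simp add: Tmon_add MW_add)
next
  case (geninv j a m) then show ?case using Tmon_W[OF g i geninv(1) q geninv(2)] by (simp add: Tmon_diff MW_diff)
qed

lemma Tword_W:
  assumes g: "good n C dd" and q: "q \<noteq> 0"
  shows "set ws \<subseteq> {1..n} \<Longrightarrow> f \<in> Wsubring n dd q \<Longrightarrow> Tword n C dd q ws f \<in> Wsubring n dd q"
proof (induction ws arbitrary: f)
  case Nil then show ?case by (simp add: Tword_def)
next
  case (Cons i ws)
  have "Tword n C dd q (i # ws) f = Tchari n C dd q i (Tword n C dd q ws f)" by (simp add: Tword_def)
  moreover have "Tword n C dd q ws f \<in> Wsubring n dd q" using Cons by simp
  ultimately show ?case using Tchari_W[OF Tmon_MW[OF g _ q]] Cons.prems by simp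
qed

lemma reduced_exists:
  assumes "w \<in> weyl_group n C" shows "\<exists>ws. reduced_word n C w ws"
proof -
  obtain vs where v: "set vs \<subseteq> {1..n} \<and> word_elt n C vs = w" using assms unfolding weyl_group_def by blast
  obtain ws where "set ws \<subseteq> {1..n} \<and> word_elt n C ws = w" and
    "\<forall>us. set us \<subseteq> {1..n} \<and> word_elt n C us = w \<longrightarrow> length ws \<le> length us"
    using ex_has_least_nat[where P="\<lambda>us. set us \<subseteq> {1..n} \<and> word_elt n C us = w" and m=length, OF v] by blast
  then show ?thesis unfolding reduced_word_def by (intro exI[of _ ws]) simp
qed

lemma main_good:
  assumes g: "good n C dd" and q: "q \<noteq> 0"
  shows "\<forall>w\<in>weyl_group n C. \<forall>f\<in>Wsubring n dd q. Tw n C dd q w f \<in> Wsubring n dd q"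
proof (intro ballI)
  fix w f assume w: "w \<in> weyl_group n C" and f: "f \<in> Wsubring n dd q"
  have "reduced_word n C w (SOME ws. reduced_word n C w ws)" using someI_ex[OF reduced_exists[OF w]] .
  then have "set (SOME ws. reduced_word n C w ws) \<subseteq> {1..n}" unfolding reduced_word_def by simp
  then show "Tw n C dd q w f \<in> Wsubring n dd q" unfolding Tw_def by (rule Tword_W[OF g q _ f])
qed




context
  fixes n :: nat and C :: "nat \<Rightarrow> nat \<Rightarrow> int" and dd :: "nat \<Rightarrow> nat"
  assumes cs: "cartan_simple n C dd"
begin

lemma Cii: "i \<in> {1..n} \<Longrightarrow> C i i = 2" using cs[unfolded cartan_simple_def, THEN conjunct2, THEN conjunct1] by blast
lemma Cneg: "i \<in> {1..n} \<Longrightarrow> j \<in> {1..n} \<Longrightarrow> i \<noteq> j \<Longrightarrow> C i j \<le> 0" using cs[unfolded cartan_simple_def, THEN conjunct2, THEN conjunct2, THEN conjunct1] by blast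
lemma Czero: "i \<in> {1..n} \<Longrightarrow> j \<in> {1..n} \<Longrightarrow> C i j = 0 \<longleftrightarrow> C j i = 0" using cs[unfolded cartan_simple_def, THEN conjunct2, THEN conjunct2, THEN conjunct2, THEN conjunct1] by blast
lemma ddpos: "i \<in> {1..n} \<Longrightarrow> dd i > 0" using cs[unfolded cartan_simple_def, THEN conjunct2, THEN conjunct2, THEN conjunct2, THEN conjunct2, THEN conjunct1] by blast
lemma Csym: "i \<in> {1..n} \<Longrightarrow> j \<in> {1..n} \<Longrightarrow> int (dd i) * C i j = int (dd j) * C j i" using cs[unfolded cartan_simple_def, THEN conjunct2, THEN conjunct2, THEN conjunct2, THEN conjunct2, THEN conjunct2, THEN conjunct1] by blast
lemma Cgcd: "Gcd (dd ` {1..n}) = 1" using cs[unfolded cartan_simple_def, THEN conjunct2, THEN conjunct2, THEN conjunct2, THEN conjunct2, THEN conjunct2, THEN conjunct2, THEN conjunct1] .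
lemma Cpd: "(\<exists>i\<in>{1..n}. x i \<noteq> 0) \<Longrightarrow>
        (\<Sum>i\<in>{1..n}. \<Sum>j\<in>{1..n}. x i * real (dd i) * real_of_int (C i j) * x j) > 0" using cs[unfolded cartan_simple_def, THEN conjunct2, THEN conjunct2, THEN conjunct2, THEN conjunct2, THEN conjunct2, THEN conjunct2, THEN conjunct2, THEN conjunct1] by blast
lemma Cconn: "J \<subseteq> {1..n} \<Longrightarrow> J \<noteq> {} \<Longrightarrow> J \<noteq> {1..n} \<Longrightarrow> \<exists>j\<in>J. \<exists>k\<in>{1..n} - J. C j k \<noteq> 0"
  using cs[unfolded cartan_simple_def, THEN conjunct2, THEN conjunct2, THEN conjunct2, THEN conjunct2, THEN conjunct2, THEN conjunct2, THEN conjunct2] by blast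

lemma Csym_real: "i \<in> {1..n} \<Longrightarrow> j \<in> {1..n} \<Longrightarrow> real (dd i) * real_of_int (C i j) = real (dd j) * real_of_int (C j i)"
  using Csym[of i j] by (metis of_int_mult of_int_of_nat_eq)

lemma Q_supp:
  assumes "P \<subseteq> {1..n}" "\<And>v. v \<notin> P \<Longrightarrow> x v = 0"
  shows "(\<Sum>i\<in>{1..n}. \<Sum>j\<in>{1..n}. x i * real (dd i) * real_of_int (C i j) * x j)
       = (\<Sum>i\<in>P. \<Sum>j\<in>P. x i * real (dd i) * real_of_int (C i j) * x j)"
proof -
  have fP: "finite P" using assms(1) finite_subset by blast
  have "(\<Sum>i\<in>{1..n}. \<Sum>j\<in>{1..n}. x i * real (dd i) * real_of_int (C i j) * x j)
      = (\<Sum>i\<in>{1..n}. \<Sum>j\<in>P. x i * real (dd i) * real_of_int (C i j) * x j)"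
    by (intro sum.cong refl sum.mono_neutral_right) (use assms in auto)
  also have "\<dots> = (\<Sum>i\<in>P. \<Sum>j\<in>P. x i * real (dd i) * real_of_int (C i j) * x j)"
    by (intro sum.mono_neutral_right) (use assms in auto)
  finally show ?thesis .
qed

lemma prod_le3:
  assumes i: "i \<in> {1..n}" and j: "j \<in> {1..n}" and ij: "i \<noteq> j"
  shows "C i j * C j i \<le> 3"
proof -
  define x where "x = (\<lambda>k. if k = i then - real_of_int (C i j) else if k = j then 2 else (0::real))"
  have pos: "(\<Sum>a\<in>{1..n}. \<Sum>b\<in>{1..n}. x a * real (dd a) * real_of_int (C a b) * x b) > 0"
    by (rule Cpd) (use j ij in \<open>auto simp: x_def\<close>)
  have "(\<Sum>a\<in>{1..n}. \<Sum>b\<in>{1..n}. x a * real (dd a) * real_of_int (C a b) * x b)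
      = (\<Sum>a\<in>{i,j}. \<Sum>b\<in>{i,j}. x a * real (dd a) * real_of_int (C a b) * x b)"
    by (rule Q_supp) (use i j in \<open>auto simp: x_def\<close>)
  also have "\<dots> = 8 * real (dd j) - 2 * real (dd j) * real_of_int (C i j) * real_of_int (C j i)"
    using ij Cii[OF i] Cii[OF j] by (simp add: x_def algebra_simps)
  finally have "0 < real (dd j) * (4 - real_of_int (C i j * C j i))" using pos by (simp add: algebra_simps)
  then have "4 - real_of_int (C i j * C j i) > 0" using ddpos[OF j] by (simp add: zero_less_mult_iff)
  then show ?thesis by linarith
qed


lemma path_false:
  fixes p :: "nat \<Rightarrow> nat" and m :: nat
  assumes m2: "2 \<le> m" and inj: "inj_on p {..m}" and pI: "\<And>k. k \<le> m \<Longrightarrow> p k \<in> {1..n}"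
    and inter: "\<And>k. 1 \<le> k \<Longrightarrow> k + 2 \<le> m \<Longrightarrow> C (p k) (p (Suc k)) = -1 \<and> C (p (Suc k)) (p k) = -1"
    and e0: "C (p 0) (p 1) * C (p 1) (p 0) \<ge> 2"
    and em: "C (p (m-1)) (p m) * C (p m) (p (m-1)) \<ge> 2"
  shows False
proof -
  obtain m' where m: "m = Suc m'" using m2 by (cases m) auto
  have m'1: "1 \<le> m'" using m2 m by simp
  have dconst: "1 \<le> k \<Longrightarrow> k \<le> m' \<Longrightarrow> dd (p k) = dd (p 1)" for k
  proof (induction k)
    case 0 then show ?case by simp
  next
    case (Suc k)
    show ?case
    proof (cases "k = 0")
      case True then show ?thesis by simp
    next
      case False
      then have k1: "1 \<le> k" by simp
      have c: "C (p k) (p (Suc k)) = -1 \<and> C (p (Suc k)) (p k) = -1" using inter[OF k1] Suc.prems m by simp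
      have "int (dd (p k)) * C (p k) (p (Suc k)) = int (dd (p (Suc k))) * C (p (Suc k)) (p k)"
        using Csym[OF pI[of k] pI[of "Suc k"]] Suc.prems m by simp
      then have "dd (p (Suc k)) = dd (p k)" using c by simp
      then show ?thesis using Suc.IH k1 Suc.prems by simp
    qed
  qed
  define e where "e = real (dd (p 1))"
  have epos: "e > 0" unfolding e_def using ddpos pI m2 by simp
  define c01 where "c01 = real_of_int (C (p 0) (p 1))"
  define c10 where "c10 = real_of_int (C (p 1) (p 0))"
  define c2 where "c2 = real_of_int (C (p m) (p m'))"
  define c3 where "c3 = real_of_int (C (p m') (p m))"
  have p01: "p 0 \<noteq> p 1" using inj m2 unfolding inj_on_def by force
  have pmm: "p m \<noteq> p m'" using inj m unfolding inj_on_def by force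
  have c01n: "c01 \<le> 0" unfolding c01_def using Cneg[OF pI pI p01] m2 by simp
  have c2n: "c2 \<le> 0" unfolding c2_def using Cneg[OF pI pI pmm] m by simp
  define \<alpha> where "\<alpha> = - c01 / 2"
  define \<beta> where "\<beta> = - c2 / 2"
  define y where "y = (\<lambda>k. if k = 0 then \<alpha> else if k = m then \<beta> else (1::real))"
  have ynn: "y k \<ge> 0" for k using c01n c2n by (simp add: y_def \<alpha>_def \<beta>_def)
  define F where "F = (\<lambda>k l. y k * real (dd (p k)) * real_of_int (C (p k) (p l)) * y l)"
  define x where "x = (\<lambda>v. if v \<in> p ` {..m} then y (the_inv_into {..m} p v) else 0)"
  have xp: "k \<le> m \<Longrightarrow> x (p k) = y k" for k
    unfolding x_def using the_inv_into_f_f[OF inj] by simp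
  have Qpos: "(\<Sum>i\<in>{1..n}. \<Sum>j\<in>{1..n}. x i * real (dd i) * real_of_int (C i j) * x j) > 0"
  proof (rule Cpd)
    show "\<exists>i\<in>{1..n}. x i \<noteq> 0" using pI[of 1] xp[of 1] m2 by (intro bexI[of _ "p 1"]) (auto simp: y_def)
  qed
  have "(\<Sum>i\<in>{1..n}. \<Sum>j\<in>{1..n}. x i * real (dd i) * real_of_int (C i j) * x j)
      = (\<Sum>i\<in>p ` {..m}. \<Sum>j\<in>p ` {..m}. x i * real (dd i) * real_of_int (C i j) * x j)"
    by (rule Q_supp) (use pI in \<open>auto simp: x_def\<close>)
  also have "\<dots> = (\<Sum>k\<in>{..m}. \<Sum>l\<in>{..m}. F k l)"
    unfolding sum.reindex[OF inj] F_def by (simp add: xp)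
  finally have Qeq: "(\<Sum>i\<in>{1..n}. \<Sum>j\<in>{1..n}. x i * real (dd i) * real_of_int (C i j) * x j) = (\<Sum>k\<in>{..m}. \<Sum>l\<in>{..m}. F k l)" .
  define G where "G = (\<lambda>k l. (if l = k then F k k else 0) + (if l = Suc k then F k l else 0) + (if k = Suc l then F k l else 0))"
  have FG: "F k l \<le> G k l" if "k \<le> m" "l \<le> m" for k l
  proof (cases "l = k \<or> l = Suc k \<or> k = Suc l")
    case True then show ?thesis unfolding G_def by auto
  next
    case False
    then have "p k \<noteq> p l" using inj that unfolding inj_on_def by auto
    then have "C (p k) (p l) \<le> 0" using Cneg pI that by blast
    then have "y k * real (dd (p k)) * real_of_int (C (p k) (p l)) \<le> 0"
      using ynn[of k] by (simp add: mult_nonneg_nonpos)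
    then have "F k l \<le> 0" unfolding F_def using ynn[of l] by (simp add: mult_nonpos_nonneg)
    then show ?thesis using False unfolding G_def by auto
  qed
  have "(\<Sum>k\<in>{..m}. \<Sum>l\<in>{..m}. F k l) \<le> (\<Sum>k\<in>{..m}. \<Sum>l\<in>{..m}. G k l)"
    by (intro sum_mono) (use FG in auto)
  also have "\<dots> = (\<Sum>k\<in>{..m}. F k k) + (\<Sum>k\<in>{..m}. if Suc k \<in> {..m} then F k (Suc k) else 0)
      + (\<Sum>l\<in>{..m}. if Suc l \<in> {..m} then F (Suc l) l else 0)"
  proof -
    have "(\<Sum>k\<in>{..m}. \<Sum>l\<in>{..m}. if k = Suc l then F k l else 0) = (\<Sum>l\<in>{..m}. \<Sum>k\<in>{..m}. if k = Suc l then F k l else 0)"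
      by (rule sum.swap)
    also have "\<dots> = (\<Sum>l\<in>{..m}. if Suc l \<in> {..m} then F (Suc l) l else 0)" by simp
    finally have 3: "(\<Sum>k\<in>{..m}. \<Sum>l\<in>{..m}. if k = Suc l then F k l else 0) = \<dots>" .
    show ?thesis unfolding G_def sum.distrib 3 by simp
  qed
  also have "\<dots> = (\<Sum>k\<in>{..m}. F k k) + 2 * (\<Sum>k\<in>{..m}. if Suc k \<in> {..m} then F k (Suc k) else 0)"
  proof -
    have "(\<Sum>l\<in>{..m}. if Suc l \<in> {..m} then F (Suc l) l else 0) = (\<Sum>k\<in>{..m}. if Suc k \<in> {..m} then F k (Suc k) else 0)"
    proof (intro sum.cong refl)
      fix k assume "k \<in> {..m}"
      show "(if Suc k \<in> {..m} then F (Suc k) k else 0) = (if Suc k \<in> {..m} then F k (Suc k) else 0)"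
      proof (cases "Suc k \<in> {..m}")
        case True
        then have "real (dd (p (Suc k))) * real_of_int (C (p (Suc k)) (p k)) = real (dd (p k)) * real_of_int (C (p k) (p (Suc k)))"
          using Csym_real[OF pI[of "Suc k"] pI[of k]] True by simp
        then show ?thesis using True unfolding F_def by (simp add: algebra_simps)
      qed simp
    qed
    then show ?thesis by simp
  qed
  also have "\<dots> = F 0 0 + (\<Sum>k\<in>{..m'}. F (Suc k) (Suc k) + 2 * F k (Suc k))"
    unfolding m sum.atMost_Suc_shift[of "\<lambda>k. F k k"] sum.atMost_Suc[of _ m'] sum.distrib sum_distrib_left
    by (simp add: sum_distrib_left)
  finally have T1: "(\<Sum>k\<in>{..m}. \<Sum>l\<in>{..m}. F k l) \<le> F 0 0 + (\<Sum>k\<in>{..m'}. F (Suc k) (Suc k) + 2 * F k (Suc k))" .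
  define h where "h = (\<lambda>k. F (Suc k) (Suc k) + 2 * F k (Suc k))"
  have hz: "h k = 0" if "1 \<le> k" "k < m'" for k
  proof -
    have c: "C (p k) (p (Suc k)) = -1" using inter[of k] that m by simp
    have "C (p (Suc k)) (p (Suc k)) = 2" using Cii[OF pI[of "Suc k"]] that m by simp
    moreover have "y k = 1" "y (Suc k) = 1" using that m by (auto simp: y_def)
    moreover have "dd (p k) = dd (p 1)" "dd (p (Suc k)) = dd (p 1)" using dconst[of k] dconst[of "Suc k"] that by auto
    ultimately show ?thesis unfolding h_def F_def using c by simp
  qed
  have "(\<Sum>k\<in>{..m'}. h k) = (\<Sum>k\<in>{0, m'}. h k)"
    by (rule sum.mono_neutral_right) (use hz in auto)
  also have "\<dots> = h 0 + h m'" using m'1 by simp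
  finally have hs: "(\<Sum>k\<in>{..m'}. h k) = h 0 + h m'" .
  have y0: "y 0 = \<alpha>" and y1: "y 1 = 1" and ym: "y m = \<beta>" and ym': "y m' = 1"
    using m m'1 by (auto simp: y_def)
  have d1: "dd (p m') = dd (p 1)" using dconst[of m'] m'1 by simp
  have C11: "C (p 1) (p 1) = 2" "C (p 0) (p 0) = 2" "C (p m) (p m) = 2" using Cii[OF pI[of 1]] Cii[OF pI[of 0]] Cii[OF pI[of m]] m2 by auto
  define d0 where "d0 = real (dd (p 0))"
  define dm where "dm = real (dd (p m))"
  have T: "F 0 0 + h 0 + h m' = 2*\<alpha>^2*d0 + 2*\<alpha>*d0*c01 + 2*e + 2*\<beta>^2*dm + 2*e*c3*\<beta>"
    unfolding h_def F_def using y0 y1 ym ym' d1 C11 m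
    by (simp add: e_def d0_def dm_def c01_def c3_def power2_eq_square algebra_simps)
  have s1: "d0 * c01 = e * c10" unfolding d0_def c01_def e_def c10_def using Csym_real[OF pI[of 0] pI[of 1]] m2 by simp
  have s2: "dm * c2 = e * c3" unfolding dm_def c2_def e_def c3_def using Csym_real[OF pI[of m] pI[of m']] m d1 by simp
  have r1: "c01 * c10 \<ge> 2"
  proof -
    have "real_of_int 2 \<le> real_of_int (C (p 0) (p 1) * C (p 1) (p 0))" using e0 by (simp only: of_int_le_iff)
    then show ?thesis unfolding c01_def c10_def by simp
  qed
  have r2: "c3 * c2 \<ge> 2"
  proof -
    have "real_of_int 2 \<le> real_of_int (C (p (m-1)) (p m) * C (p m) (p (m-1)))" using em by (simp only: of_int_le_iff)
    then show ?thesis unfolding c2_def c3_def using m by (simp add: mult.commute)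
  qed
  have A1: "2*\<alpha>^2*d0 + 2*\<alpha>*d0*c01 = - (d0 * c01) * c01 / 2"
    unfolding \<alpha>_def by (simp add: power2_eq_square algebra_simps)
  have A1': "- (d0 * c01) * c01 / 2 \<le> - e"
  proof -
    have "e * 2 \<le> e * (c01 * c10)" using r1 epos by (intro mult_left_mono) auto
    then show ?thesis unfolding s1 by (simp add: algebra_simps)
  qed
  have A2: "2*\<beta>^2*dm + 2*e*c3*\<beta> = (dm * c2) * c2 / 2 - e * c3 * c2"
    unfolding \<beta>_def by (simp add: power2_eq_square algebra_simps)
  have A2': "(dm * c2) * c2 / 2 - e * c3 * c2 \<le> - e"
  proof -
    have "e * 2 \<le> e * (c3 * c2)" using r2 epos by (intro mult_left_mono) auto
    then show ?thesis unfolding s2 by (simp add: algebra_simps)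
  qed
  have "(\<Sum>k\<in>{..m}. \<Sum>l\<in>{..m}. F k l) \<le> 0"
    using T1 hs T A1 A1' A2 A2' unfolding h_def by linarith
  then show False using Qpos Qeq by linarith
qed


definition adj :: "nat \<Rightarrow> nat \<Rightarrow> bool" where
  "adj a b \<longleftrightarrow> a \<in> {1..n} \<and> b \<in> {1..n} \<and> a \<noteq> b \<and> C a b \<noteq> 0"

definition mult :: "nat \<Rightarrow> nat \<Rightarrow> bool" where
  "mult a b \<longleftrightarrow> adj a b \<and> C a b * C b a \<ge> 2"

lemma adj_sym: "adj a b \<Longrightarrow> adj b a"
  unfolding adj_def using Czero by blast

lemma mult_sym: "mult a b \<Longrightarrow> mult b a"
  unfolding mult_def using adj_sym by (simp add: mult.commute)

lemma int_prod_aux: "(a::int) \<le> -1 \<Longrightarrow> b \<le> -1 \<Longrightarrow> a * b < 2 \<Longrightarrow> a = -1 \<and> b = -1"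
proof -
  assume a: "a \<le> -1" and b: "b \<le> -1" and ab: "a * b < 2"
  have e: "a * b = (-a) * (-b)" by simp
  have "(-a) * 1 \<le> (-a) * (-b)" by (rule mult_left_mono) (use a b in auto)
  moreover have "1 * (-b) \<le> (-a) * (-b)" by (rule mult_right_mono) (use a b in auto)
  ultimately show ?thesis using a b ab e by linarith
qed

lemma simple_edge: "adj a b \<Longrightarrow> \<not> mult a b \<Longrightarrow> C a b = -1 \<and> C b a = -1"
proof -
  assume ab: "adj a b" and nm: "\<not> mult a b"
  have "C a b \<le> 0" "C b a \<le> 0" using ab Cneg unfolding adj_def by auto
  moreover have "C a b \<noteq> 0" "C b a \<noteq> 0" using ab Czero unfolding adj_def by auto
  ultimately have "C a b \<le> -1" "C b a \<le> -1" by auto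
  moreover have "C a b * C b a < 2" using ab nm unfolding mult_def by auto
  ultimately show ?thesis using int_prod_aux by blast
qed

definition config :: "(nat \<Rightarrow> nat) \<Rightarrow> nat \<Rightarrow> bool" where
  "config p m \<longleftrightarrow> 2 \<le> m \<and> inj_on p {..m} \<and> (\<forall>k<m. adj (p k) (p (Suc k)))
     \<and> mult (p 0) (p 1) \<and> mult (p (m-1)) (p m)"

lemma config_false: "config p m \<Longrightarrow> False"
proof (induction m rule: less_induct)
  case (less m)
  have m2: "2 \<le> m" and inj: "inj_on p {..m}" and ad: "\<And>k. k < m \<Longrightarrow> adj (p k) (p (Suc k))"
    and f: "mult (p 0) (p 1)" and l: "mult (p (m-1)) (p m)" using less.prems unfolding config_def by auto
  show False
  proof (cases "\<exists>k. 1 \<le> k \<and> k + 2 \<le> m \<and> mult (p k) (p (Suc k))")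
    case True
    then obtain k where k: "1 \<le> k" "k + 2 \<le> m" "mult (p k) (p (Suc k))" by blast
    have "config p (Suc k)" unfolding config_def
    proof (intro conjI allI impI)
      show "2 \<le> Suc k" using k by simp
      show "inj_on p {..Suc k}" by (rule inj_on_subset[OF inj]) (use k in auto)
      fix t assume "t < Suc k" then show "adj (p t) (p (Suc t))" using ad k by simp
    qed (use f k in auto)
    then show False using less.IH[of "Suc k"] k by simp
  next
    case False
    have pI: "\<And>k. k \<le> m \<Longrightarrow> p k \<in> {1..n}"
    proof -
      fix k assume k: "k \<le> m"
      show "p k \<in> {1..n}"
      proof (cases "k < m")
        case True then show ?thesis using ad[of k] unfolding adj_def by blast
      next
        case False then have "k = Suc (m - 1)" using k m2 by simp
        then show ?thesis using ad[of "m-1"] m2 unfolding adj_def by simp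
      qed
    qed
    show False
    proof (rule path_false[OF m2 inj pI])
      fix k assume "1 \<le> k" "k + 2 \<le> m"
      then show "C (p k) (p (Suc k)) = -1 \<and> C (p (Suc k)) (p k) = -1"
        using simple_edge ad[of k] False by auto
    next
      show "2 \<le> C (p 0) (p 1) * C (p 1) (p 0)" using f unfolding mult_def by simp
      show "2 \<le> C (p (m - 1)) (p m) * C (p m) (p (m - 1))" using l unfolding mult_def by simp
    qed
  qed
qed

definition walk :: "nat set \<Rightarrow> nat set \<Rightarrow> (nat \<Rightarrow> nat) \<Rightarrow> nat \<Rightarrow> bool" where
  "walk J0 J1 p m \<longleftrightarrow> p 0 \<in> J0 \<and> p m \<in> J1 \<and> (\<forall>k<m. adj (p k) (p (Suc k)))"

lemma walks_exist:
  assumes "J0 \<subseteq> {1..n}" "J0 \<noteq> {}" "x \<in> {1..n}"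
  shows "\<exists>p m. walk J0 {x} p m"
proof -
  define R where "R = {y\<in>{1..n}. \<exists>p m. walk J0 {y} p m}"
  have J0R: "J0 \<subseteq> R"
  proof
    fix y assume y: "y \<in> J0"
    have "walk J0 {y} (\<lambda>_. y) 0" using y unfolding walk_def by simp
    then show "y \<in> R" using y assms(1) unfolding R_def by blast
  qed
  have "R = {1..n}"
  proof (rule ccontr)
    assume ne: "R \<noteq> {1..n}"
    have "R \<subseteq> {1..n}" "R \<noteq> {}" using J0R assms(2) unfolding R_def by auto
    then obtain j k where j: "j \<in> R" and k: "k \<in> {1..n} - R" and c: "C j k \<noteq> 0" using Cconn ne by blast
    obtain p m where w: "walk J0 {j} p m" using j unfolding R_def by blast
    have jk: "j \<noteq> k" using j k by blast
    have adjk: "adj j k" unfolding adj_def using j k c jk unfolding R_def by auto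
    define p' where "p' = (\<lambda>t. if t \<le> m then p t else k)"
    have "walk J0 {k} p' (Suc m)" unfolding walk_def
    proof (intro conjI allI impI)
      show "p' 0 \<in> J0" using w unfolding walk_def p'_def by simp
      show "p' (Suc m) \<in> {k}" unfolding p'_def by simp
      fix t assume t: "t < Suc m"
      show "adj (p' t) (p' (Suc t))"
      proof (cases "t < m")
        case True then show ?thesis using w unfolding walk_def p'_def by simp
      next
        case False then have "t = m" using t by simp
        then show ?thesis using w adjk unfolding walk_def p'_def by simp
      qed
    qed
    then have "k \<in> R" using k unfolding R_def by blast
    then show False using k by blast
  qed
  then show ?thesis using assms(3) unfolding R_def by blast
qed


lemma shortest:
  assumes "walk J0 J1 p0 m0"
  shows "\<exists>p m. walk J0 J1 p m \<and> inj_on p {..m} \<and> (\<forall>k. 0 < k \<and> k \<le> m \<longrightarrow> p k \<notin> J0)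
     \<and> (\<forall>k<m. p k \<notin> J1) \<and> (\<forall>p' m'. walk J0 J1 p' m' \<longrightarrow> m \<le> m')"
proof -
  obtain m where ex: "\<exists>p. walk J0 J1 p m" and min: "\<And>m'. (\<exists>p. walk J0 J1 p m') \<Longrightarrow> m \<le> m'"
    using ex_has_least_nat[of "\<lambda>k. \<exists>p. walk J0 J1 p k" m0 id] assms by auto
  obtain p where w: "walk J0 J1 p m" using ex by blast
  have p0: "p 0 \<in> J0" and pm: "p m \<in> J1" and ad: "\<And>k. k < m \<Longrightarrow> adj (p k) (p (Suc k))"
    using w unfolding walk_def by auto
  have n1: "\<forall>k<m. p k \<notin> J1"
  proof (intro allI impI)
    fix k assume k: "k < m"
    show "p k \<notin> J1"
    proof
      assume "p k \<in> J1"
      then have "walk J0 J1 p k" using p0 ad k unfolding walk_def by auto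
      then show False using min[of k] k by auto
    qed
  qed
  have n0: "\<forall>k. 0 < k \<and> k \<le> m \<longrightarrow> p k \<notin> J0"
  proof (intro allI impI)
    fix k assume k: "0 < k \<and> k \<le> m"
    show "p k \<notin> J0"
    proof
      assume pk: "p k \<in> J0"
      have "walk J0 J1 (\<lambda>t. p (t + k)) (m - k)" unfolding walk_def
      proof (intro conjI allI impI)
        show "p (0 + k) \<in> J0" using pk by simp
        show "p (m - k + k) \<in> J1" using pm k by simp
        fix t assume "t < m - k" then show "adj (p (t + k)) (p (Suc t + k))" using ad[of "t + k"] by simp
      qed
      then have "m \<le> m - k" using min by blast
      then show False using k by arith
    qed
  qed
  have inj: "inj_on p {..m}"
  proof (rule ccontr)
    assume "\<not> inj_on p {..m}"
    then obtain a b where ab: "a < b" "b \<le> m" "p a = p b"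
      unfolding inj_on_def by (metis atMost_iff linorder_neqE_nat)
    define q where "q = (\<lambda>t. if t \<le> a then p t else p (t + (b - a)))"
    have "walk J0 J1 q (m - (b - a))" unfolding walk_def
    proof (intro conjI allI impI)
      show "q 0 \<in> J0" using p0 by (simp add: q_def)
      show "q (m - (b - a)) \<in> J1"
      proof (cases "m - (b - a) \<le> a")
        case True
        then have "m - (b - a) = a" using ab by simp
        moreover have "b = m" using True ab by simp
        ultimately show ?thesis using pm ab by (simp add: q_def)
      next
        case False then show ?thesis using pm ab by (simp add: q_def)
      qed
      fix t assume t: "t < m - (b - a)"
      show "adj (q t) (q (Suc t))"
      proof (cases "t < a")
        case True then show ?thesis using ad[of t] ab by (simp add: q_def)
      next
        case False
        show ?thesis
        proof (cases "t = a")
          case True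
          then have "q t = p b" "q (Suc t) = p (Suc b)" using ab by (auto simp: q_def)
          then show ?thesis using ad[of b] t True ab by simp
        next
          case False
          then have "q t = p (t + (b - a))" "q (Suc t) = p (Suc (t + (b - a)))" using \<open>\<not> t < a\<close> ab by (auto simp: q_def)
          then show ?thesis using ad[of "t + (b - a)"] t ab by simp
        qed
      qed
    qed
    then have "m \<le> m - (b - a)" using min by blast
    then show False using ab by arith
  qed
  show ?thesis using w inj n0 n1 min by blast
qed

lemma no_two_mult:
  assumes uv: "mult u v" and yz: "mult y z" and ne: "{u,v} \<noteq> {y,z}"
  shows False
proof -
  define J0 where "J0 = {u,v}"
  define J1 where "J1 = {y,z}"
  have J0I: "J0 \<subseteq> {1..n}" using uv unfolding J0_def mult_def adj_def by auto
  have yI: "y \<in> {1..n}" using yz unfolding mult_def adj_def by auto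
  obtain p0 m0 where "walk J0 {y} p0 m0" using walks_exist[OF J0I _ yI] unfolding J0_def by blast
  then have "walk J0 J1 p0 m0" unfolding walk_def J1_def by auto
  then obtain p m where w: "walk J0 J1 p m" and inj: "inj_on p {..m}"
    and n0': "\<forall>k. 0 < k \<and> k \<le> m \<longrightarrow> p k \<notin> J0" and n1': "\<forall>k<m. p k \<notin> J1"
    and min': "\<forall>p' m'. walk J0 J1 p' m' \<longrightarrow> m \<le> m'"
    using shortest by blast
  have n0: "\<And>k. 0 < k \<Longrightarrow> k \<le> m \<Longrightarrow> p k \<notin> J0" using n0' by blast
  have n1: "\<And>k. k < m \<Longrightarrow> p k \<notin> J1" using n1' by blast
  have min: "\<And>p' m'. walk J0 J1 p' m' \<Longrightarrow> m \<le> m'" using min' by blast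
  have p0: "p 0 \<in> J0" and pm: "p m \<in> J1" and ad: "\<And>k. k < m \<Longrightarrow> adj (p k) (p (Suc k))"
    using w unfolding walk_def by auto
  have uv': "u \<noteq> v" "y \<noteq> z" using uv yz unfolding mult_def adj_def by auto
  define u' where "u' = (if p 0 = u then v else u)"
  define z' where "z' = (if p m = y then z else y)"
  have u'J0: "u' \<in> J0" and u'p: "u' \<noteq> p 0" and mu: "mult u' (p 0)" and J0eq: "J0 = {p 0, u'}"
    using p0 uv uv' mult_sym[OF uv] unfolding u'_def J0_def by auto
  have z'J1: "z' \<in> J1" and z'p: "z' \<noteq> p m" and mz: "mult (p m) z'" and J1eq: "J1 = {p m, z'}"
    using pm yz uv' mult_sym[OF yz] unfolding z'_def J1_def by auto
  have uz: "u' \<noteq> z'"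
  proof
    assume eq: "u' = z'"
    have "walk J0 J1 (\<lambda>_. u') 0" using u'J0 z'J1 eq unfolding walk_def by simp
    then have m0: "m = 0" using min by fastforce
    then have "J0 = J1" using J0eq J1eq eq by simp
    then show False using ne unfolding J0_def J1_def by simp
  qed
  define r where "r = (\<lambda>t. if t = 0 then u' else if t \<le> Suc m then p (t - 1) else z')"
  have "config r (Suc (Suc m))" unfolding config_def
  proof (intro conjI allI impI)
    show "2 \<le> Suc (Suc m)" by simp
    show "mult (r 0) (r 1)" using mu by (simp add: r_def)
    show "mult (r (Suc (Suc m) - 1)) (r (Suc (Suc m)))" using mz by (simp add: r_def)
    fix t assume t: "t < Suc (Suc m)"
    show "adj (r t) (r (Suc t))"
    proof (cases "t = 0")
      case True then show ?thesis using mu unfolding mult_def by (simp add: r_def)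
    next
      case False
      show ?thesis
      proof (cases "t = Suc m")
        case True then show ?thesis using mz unfolding mult_def by (simp add: r_def)
      next
        case False
        then have "t - 1 < m" "r t = p (t - 1)" "r (Suc t) = p (Suc (t - 1))" using t \<open>t \<noteq> 0\<close> by (auto simp: r_def)
        then show ?thesis using ad[of "t - 1"] by simp
      qed
    qed
  next
    show "inj_on r {..Suc (Suc m)}"
    proof (rule inj_onI)
      fix s t assume s: "s \<in> {..Suc (Suc m)}" and t: "t \<in> {..Suc (Suc m)}" and rst: "r s = r t"
      have cls: "\<And>k. k \<le> Suc (Suc m) \<Longrightarrow> (k = 0 \<and> r k = u') \<or> (0 < k \<and> k \<le> Suc m \<and> r k = p (k - 1)) \<or> (k = Suc (Suc m) \<and> r k = z')"
        by (auto simp: r_def)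
      have notu: "\<And>k. 0 < k \<Longrightarrow> k \<le> Suc m \<Longrightarrow> p (k - 1) \<noteq> u'"
      proof -
        fix k assume "0 < k" "k \<le> Suc m"
        show "p (k - 1) \<noteq> u'"
        proof (cases "k = 1")
          case True then show ?thesis using u'p by auto
        next
          case False
          then have "0 < k - 1" "k - 1 \<le> m" using \<open>0 < k\<close> \<open>k \<le> Suc m\<close> by auto
          then show ?thesis using n0[of "k - 1"] u'J0 by auto
        qed
      qed
      have notz: "\<And>k. 0 < k \<Longrightarrow> k \<le> Suc m \<Longrightarrow> p (k - 1) \<noteq> z'"
      proof -
        fix k assume "0 < k" "k \<le> Suc m"
        show "p (k - 1) \<noteq> z'"
        proof (cases "k = Suc m")
          case True then show ?thesis using z'p by auto
        next
          case False
          then have "k - 1 < m" using \<open>0 < k\<close> \<open>k \<le> Suc m\<close> by auto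
          then show ?thesis using n1[of "k - 1"] z'J1 by auto
        qed
      qed
      have pinj: "\<And>a b. 0 < a \<Longrightarrow> a \<le> Suc m \<Longrightarrow> 0 < b \<Longrightarrow> b \<le> Suc m \<Longrightarrow> p (a - 1) = p (b - 1) \<Longrightarrow> a = b"
      proof -
        fix a b assume "0 < a" "a \<le> Suc m" "0 < b" "b \<le> Suc m" "p (a - 1) = p (b - 1)"
        then have "a - 1 = b - 1" using inj unfolding inj_on_def by auto
        then show "a = b" using \<open>0 < a\<close> \<open>0 < b\<close> by simp
      qed
      have s': "s \<le> Suc (Suc m)" and t': "t \<le> Suc (Suc m)" using s t by auto
      from cls[OF s'] cls[OF t'] show "s = t"
      proof (elim disjE conjE)
        assume "0 < s" "s \<le> Suc m" "r s = p (s - 1)" "0 < t" "t \<le> Suc m" "r t = p (t - 1)"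
        then show "s = t" using pinj rst by metis
      qed (use rst notu[of s] notu[of t] notz[of s] notz[of t] uz in auto)
    qed
  qed
  then show False using config_false by blast
qed

lemma d_vals:
  assumes uv: "mult u v" and x: "x \<in> {1..n}"
  shows "dd x = dd u \<or> dd x = dd v"
proof -
  define J where "J = {w\<in>{1..n}. dd w = dd u \<or> dd w = dd v}"
  have uI: "u \<in> {1..n}" using uv unfolding mult_def adj_def by simp
  have "J = {1..n}"
  proof (rule ccontr)
    assume ne: "J \<noteq> {1..n}"
    have Jsub: "J \<subseteq> {1..n}" unfolding J_def by blast
    have "u \<in> J" using uI unfolding J_def by simp
    then have Jne: "J \<noteq> {}" by blast
    obtain j k where j: "j \<in> J" and k: "k \<in> {1..n} - J" and c: "C j k \<noteq> 0" using Cconn[OF Jsub Jne ne] by blast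
    have jI: "j \<in> {1..n}" using j unfolding J_def by simp
    have kI: "k \<in> {1..n}" and kJ: "k \<notin> J" using k by auto
    have jk: "j \<noteq> k" using j kJ by blast
    have ajk: "adj j k" unfolding adj_def using jI kI jk c by simp
    show False
    proof (cases "mult j k")
      case True
      have "{u,v} = {j,k}"
      proof (rule ccontr)
        assume "{u,v} \<noteq> {j,k}"
        then show False by (rule no_two_mult[OF uv True])
      qed
      moreover have "k \<in> {j,k}" by simp
      ultimately have "k \<in> {u,v}" by simp
      then have "dd k = dd u \<or> dd k = dd v" by auto
      then show False using kI kJ unfolding J_def by simp
    next
      case False
      have ce: "C j k = -1 \<and> C k j = -1" using simple_edge[OF ajk False] .
      have "int (dd j) * C j k = int (dd k) * C k j" by (rule Csym[OF jI kI])
      then have "dd j = dd k" using ce by simp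
      then show False using j kI kJ unfolding J_def by simp
    qed
  qed
  then have "x \<in> J" using x by simp
  then show ?thesis unfolding J_def by simp
qed

end



lemma cs_good:
  assumes cs: "cartan_simple n C dd"
  shows "good n C dd"
  unfolding good_def
proof (intro ballI conjI impI)
  fix i j assume i: "i \<in> {1..n}" and j: "j \<in> {1..n}"
  define D where "D = lacing n dd"
  have fin: "finite (dd ` {1..n})" by simp
  have leD: "\<And>x. x \<in> {1..n} \<Longrightarrow> dd x \<le> D" unfolding D_def lacing_def using fin by (intro Max_ge) auto
  have DI: "D \<in> dd ` {1..n}" unfolding D_def lacing_def using fin i by (intro Max_in) auto
  have kd: "\<And>x. kind n dd x = (if dd x = D then 0 else if dd x + 1 = D then 1 else 2)" unfolding kind_def D_def by simp
  have Cij_le: "C j i \<noteq> 0 \<Longrightarrow> i \<noteq> j \<Longrightarrow> C i j \<le> -1"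
  proof -
    assume "C j i \<noteq> 0" "i \<noteq> j"
    then have "C i j \<noteq> 0" "C i j \<le> 0" using Czero[OF cs i j] Cneg[OF cs i j] by auto
    then show "C i j \<le> -1" by simp
  qed
  have sym: "int (dd i) * C i j = int (dd j) * C j i" using Csym[OF cs i j] .
  have p3: "i \<noteq> j \<Longrightarrow> C i j * C j i \<le> 3" using prod_le3[OF cs i j] .
  have ddj: "dd j > 0" "dd i > 0" using ddpos[OF cs j] ddpos[OF cs i] by auto
  have vals: "\<And>x. C i j * C j i \<ge> 2 \<Longrightarrow> i \<noteq> j \<Longrightarrow> x \<in> {1..n} \<Longrightarrow> dd x = dd i \<or> dd x = dd j"
  proof -
    fix x assume pr: "C i j * C j i \<ge> 2" and ij: "i \<noteq> j" and x: "x \<in> {1..n}"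
    have "C i j \<noteq> 0" using pr by auto
    then have "mult n C i j" unfolding mult_def[OF cs] adj_def[OF cs] using i j ij pr by simp
    then show "dd x = dd i \<or> dd x = dd j" using d_vals[OF cs _ x] by blast
  qed
  have Dmax: "\<And>a b. (\<forall>x\<in>{1..n}. dd x = a \<or> dd x = b) \<Longrightarrow> a \<le> b \<Longrightarrow> D \<le> b"
  proof -
    fix a b assume "\<forall>x\<in>{1..n}. dd x = a \<or> dd x = b" "a \<le> b"
    then show "D \<le> b" using DI by auto
  qed
  {
    assume c: "C j i = -1"
    have ij: "i \<noteq> j" using c Cii[OF cs i] by auto
    have le: "C i j \<le> -1" using Cij_le ij c by simp
    show "kind n dd j = 0 \<or> kind n dd j = kind n dd i"
    proof (cases "C i j = -1")
      case True
      then have "dd i = dd j" using sym c by simp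
      then show ?thesis unfolding kind_def by simp
    next
      case False
      then have le2: "C i j \<le> -2" using le by simp
      have pr: "C i j * C j i \<ge> 2" using c le2 by simp
      have e: "int (dd j) = int (dd i) * (- C i j)" using sym c by simp
      have "int (dd i) * 2 \<le> int (dd i) * (- C i j)" using le2 ddj by (intro mult_left_mono) auto
      then have lt: "dd i \<le> dd j" using e by simp
      have "\<forall>x\<in>{1..n}. dd x = dd i \<or> dd x = dd j" using vals[OF pr ij] by blast
      then have "D \<le> dd j" using Dmax lt by blast
      then have "dd j = D" using leD[OF j] by simp
      then show ?thesis using kd by simp
    qed
  }
  {
    assume c: "C j i = -2"
    have ij: "i \<noteq> j" using c Cii[OF cs i] by auto
    have le: "C i j \<le> -1" using Cij_le ij c by simp
    have "C i j * C j i \<le> 3" using p3 ij .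
    then have cij: "C i j = -1" using le c by simp
    then have e: "dd i = 2 * dd j" using sym c by simp
    have pr: "C i j * C j i \<ge> 2" using c cij by simp
    have all: "\<forall>x\<in>{1..n}. dd x = dd i \<or> dd x = dd j" using vals[OF pr ij] by blast
    have "dd j dvd Gcd (dd ` {1..n})"
    proof (rule Gcd_greatest)
      fix b assume "b \<in> dd ` {1..n}"
      then show "dd j dvd b" using all e by auto
    qed
    then have "dd j = 1" using Cgcd[OF cs] by simp
    moreover have "D \<le> dd i"
    proof -
      have all': "\<forall>x\<in>{1..n}. dd x = dd j \<or> dd x = dd i" using all by blast
      show ?thesis by (rule Dmax[OF all']) (use e in simp)
    qed
    moreover have "dd i \<le> D" using leD[OF i] .
    ultimately show "kind n dd j \<le> 1" using kd e by simp
  }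
  {
    assume c: "C j i = -3"
    have ij: "i \<noteq> j" using c Cii[OF cs i] by auto
    have le: "C i j \<le> -1" using Cij_le ij c by simp
    have "C i j * C j i \<le> 3" using p3 ij .
    then have cij: "C i j = -1" using le c by simp
    then have e: "dd i = 3 * dd j" using sym c by simp
    have "dd i \<le> D" using leD[OF i] .
    then have "dd j + 1 \<noteq> D" using e ddj by simp
    then show "kind n dd j = 0 \<or> kind n dd j = 2" using kd by simp
  }
qed

theorem mainTheorem1:
  fixes n :: nat and C :: "nat \<Rightarrow> nat \<Rightarrow> int" and dd :: "nat \<Rightarrow> nat" and q :: complex
  assumes "cartan_simple n C dd"
    and "not_root_of_unity q"
  shows "\<forall>w\<in>weyl_group n C. \<forall>f\<in>Wsubring n dd q. Tw n C dd q w f \<in> Wsubring n dd q"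
proof -
  have q: "q \<noteq> 0" using assms(2) unfolding not_root_of_unity_def by simp
  show ?thesis by (rule main_good[OF cs_good[OF assms(1)] q])
qed


end
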